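(* Let $\mathcal{C}=\{(a_i,b_i,y_i)\}_{i=1}^{|\mathcal{C}|}$ be a set of constraints, $\omega>0$, and let embeddings $\boldsymbol{z}_j\in\mathbb{R}^D\setminus\{\mathbf 0\}$ satisfy $\mathcal{L}_{\mathrm{ang}}\le\varepsilon$ for some $\varepsilon>0$. Then: (i) for each positive constraint $(a_i,b_i,1)\in\mathcal{C}$, $0\le\theta_{\boldsymbol{z}_{a_i},\boldsymbol{z}_{b_i}}\le\Delta^+(\varepsilon):=\arccos\big(2e^{-|\mathcal{C}|\varepsilon}-1\big)$, and $\Delta^+(\varepsilon)\approx 2\sqrt{|\mathcal{C}|\varepsilon}$ as $\varepsilon\to0$; (ii) for each negative constraint $(a_i,b_i,0)\in\mathcal{C}$ with $\theta_{\boldsymbol{z}_{a_i},\boldsymbol{z}_{b_i}}\le\pi/\omega$, $0\le\frac{\pi}{\omega}-\theta_{\boldsymbol{z}_{a_i},\boldsymbol{z}_{b_i}}\le\Delta^-(\varepsilon):=\frac{1}{\omega}\arccos\big(2e^{-|\mathcal{C}|\varepsilon}-1\big)$, and $\Delta^-(\varepsilon)\approx 2\sqrt{|\mathcal{C}|\varepsilon}/\omega$ as $\varepsilon\to0$ (here $\approx$ means the ratio tends to $1$).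
   Context: For nonzero vectors, $\theta_{\boldsymbol{u},\boldsymbol{v}}\in[0,\pi]$ is the angle. The loss is $\mathcal{L}_{\mathrm{ang}}=-\frac{1}{|\mathcal{C}|}\sum_{i}\big(y_i\log \mathrm{Sim}(a_i,b_i)+(1-y_i)\log(1-\mathrm{Sim}(a_i,b_i))\big)$, with $\mathrm{Sim}(a_i,b_i)=\tfrac12(\cos\theta_{\boldsymbol{z}_{a_i},\boldsymbol{z}_{b_i}}+1)$ if $y_i=1$ and $\mathrm{Sim}(a_i,b_i)=\tfrac12(\cos(\min(\omega\theta_{\boldsymbol{z}_{a_i},\boldsymbol{z}_{b_i}},\pi))+1)$ if $y_i=0$. *)

theory Defs
  imports "HOL-Analysis.Analysis"
begin

definition vec_angle :: "'a::real_inner \<Rightarrow> 'a \<Rightarrow> real" where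
  "vec_angle u v = arccos (inner u v / (norm u * norm v))"

definition neglog :: "real \<Rightarrow> ereal" where
  "neglog x = (if x > 0 then ereal (- ln x) else \<infinity>)"

text \<open>Similarity of a constraint (a, b, y); y = True encodes y_i = 1, y = False encodes y_i = 0.\<close>
definition Sim :: "real \<Rightarrow> ('j \<Rightarrow> 'a::real_inner) \<Rightarrow> 'j \<Rightarrow> 'j \<Rightarrow> bool \<Rightarrow> real" where
  "Sim \<omega> z a b y =
     (if y then (cos (vec_angle (z a) (z b)) + 1) / 2
      else (cos (min (\<omega> * vec_angle (z a) (z b)) pi) + 1) / 2)"

text \<open>Per-constraint term of the binary cross-entropy:
  -(y log Sim + (1-y) log(1 - Sim)).\<close>
definition ang_term :: "real \<Rightarrow> ('j \<Rightarrow> 'a::real_inner) \<Rightarrow> 'j \<times> 'j \<times> bool \<Rightarrow> ereal" where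
  "ang_term \<omega> z c = (case c of (a, b, y) \<Rightarrow>
     (if y then neglog (Sim \<omega> z a b y) else neglog (1 - Sim \<omega> z a b y)))"

definition L_ang :: "real \<Rightarrow> ('j \<Rightarrow> 'a::real_inner) \<Rightarrow> ('j \<times> 'j \<times> bool) list \<Rightarrow> ereal" where
  "L_ang \<omega> z C = ereal (1 / real (length C)) * (\<Sum>i<length C. ang_term \<omega> z (C ! i))"

definition Delta_plus :: "nat \<Rightarrow> real \<Rightarrow> real" where
  "Delta_plus m \<epsilon> = arccos (2 * exp (- real m * \<epsilon>) - 1)"

definition Delta_minus :: "real \<Rightarrow> nat \<Rightarrow> real \<Rightarrow> real" where
  "Delta_minus \<omega> m \<epsilon> = (1 / \<omega>) * arccos (2 * exp (- real m * \<epsilon>) - 1)"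

end

theory Submission
  imports Defs "HOL-Real_Asymp.Real_Asymp"
begin

lemma arccos_exp_eq:
  fixes t :: real assumes "t \<ge> 0"
  shows "arccos (2 * exp (- t) - 1) = 2 * arctan (sqrt (exp t - 1))"
proof -
  define s where "s = sqrt (exp t - 1)"
  have s0: "s \<ge> 0" using assms by (simp add: s_def)
  have ss: "s\<^sup>2 = exp t - 1" using assms by (simp add: s_def)
  have "cos (2 * arctan s) = 2 * (cos (arctan s))\<^sup>2 - 1" by (simp add: cos_double_cos)
  also have "(cos (arctan s))\<^sup>2 = 1 / (1 + s\<^sup>2)"
    by (simp add: cos_arctan power_divide add_pos_nonneg)
  also have "1 / (1 + s\<^sup>2) = exp (- t)" using ss by (simp add: exp_minus inverse_eq_divide)
  finally have c: "cos (2 * arctan s) = 2 * exp (- t) - 1" .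
  have "0 \<le> arctan s" using s0 by simp
  moreover have "arctan s < pi / 2" using arctan_ubound by simp
  ultimately have "arccos (cos (2 * arctan s)) = 2 * arctan s"
    by (intro arccos_cos) auto
  then show ?thesis using c by (simp add: s_def)
qed

lemma base_lim:
  fixes m :: real assumes "m > 0"
  shows "((\<lambda>e. arccos (2 * exp (- m * e) - 1) / (2 * sqrt (m * e))) \<longlongrightarrow> 1) (at_right 0)"
proof -
  have "((\<lambda>e. 2*arctan (sqrt (exp (m*e) - 1)) / (2 * sqrt (m*e))) \<longlongrightarrow> 1) (at_right 0)"
    using assms by real_asymp
  moreover have "eventually (\<lambda>e. 2*arctan (sqrt (exp (m*e) - 1)) / (2 * sqrt (m*e))
      = arccos (2 * exp (- m * e) - 1) / (2 * sqrt (m * e))) (at_right 0)"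
  proof -
    show "eventually (\<lambda>e. 2*arctan (sqrt (exp (m*e) - 1)) / (2 * sqrt (m*e))
      = arccos (2 * exp (- m * e) - 1) / (2 * sqrt (m * e))) (at_right 0)"
      using eventually_at_right_less[of "0::real"]
    proof (rule eventually_mono)
      fix e :: real assume "e > 0"
      then have "m * e \<ge> 0" using assms by simp
      from arccos_exp_eq[OF this] show "2*arctan (sqrt (exp (m*e) - 1)) / (2 * sqrt (m*e))
      = arccos (2 * exp (- m * e) - 1) / (2 * sqrt (m * e))" by simp
    qed
  qed
  ultimately show ?thesis by (rule Lim_transform_eventually)
qed

lemma cos_vec_angle:
  fixes u v :: "'a::real_inner"
  assumes "u \<noteq> 0" "v \<noteq> 0"
  shows "0 \<le> vec_angle u v \<and> vec_angle u v \<le> pi \<and> cos (vec_angle u v) = inner u v / (norm u * norm v)"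
proof -
  have p: "norm u * norm v > 0" using assms by simp
  have "\<bar>inner u v\<bar> \<le> norm u * norm v" by (rule Cauchy_Schwarz_ineq2)
  then have "- (norm u * norm v) \<le> inner u v" "inner u v \<le> norm u * norm v" by linarith+
  then have "-1 \<le> inner u v / (norm u * norm v)" "inner u v / (norm u * norm v) \<le> 1"
    using p by (simp_all add: le_divide_eq divide_le_eq)
  from arccos[OF this] show ?thesis unfolding vec_angle_def by simp
qed

lemma neglog_nonneg: "x \<le> 1 \<Longrightarrow> 0 \<le> neglog x"
  unfolding neglog_def by auto

lemma neglog_bound:
  assumes "neglog x \<le> ereal t"
  shows "exp (- t) \<le> x"
proof -
  have x: "x > 0" using assms by (auto simp: neglog_def split: if_splits)
  then have "- ln x \<le> t" using assms by (simp add: neglog_def)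
  then have "exp (- t) \<le> exp (ln x)" by simp
  then show ?thesis using x by simp
qed

lemma exp_minus_eq: "exp (- m * e) = exp (- ((m::real) * e))"
  by simp

lemma lin_aux: "(x::real) \<le> 1 - (c + 1) / 2 \<Longrightarrow> p = - c \<Longrightarrow> y = x \<Longrightarrow> 2 * y - 1 \<le> p"
  by (simp add: field_simps)

lemma cos_p1: "0 \<le> cos (x::real) + 1"
  using cos_ge_minus_one[of x] by linarith

lemma Sim_le1: "Sim \<omega> z a b y \<le> 1" "0 \<le> Sim \<omega> z a b y"
  unfolding Sim_def by (auto simp: cos_p1)

lemma ang_term_nonneg: "0 \<le> ang_term \<omega> z c"
  unfolding ang_term_def using Sim_le1
  by (auto split: prod.splits intro!: neglog_nonneg simp: algebra_simps)

lemma term_bound: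
  assumes "L_ang \<omega> z C \<le> ereal \<epsilon>" "i < length C"
  shows "ang_term \<omega> z (C ! i) \<le> ereal (real (length C) * \<epsilon>)"
proof -
  define S where "S = (\<Sum>i<length C. ang_term \<omega> z (C ! i))"
  have S0: "0 \<le> S" unfolding S_def by (intro sum_nonneg ang_term_nonneg)
  have ti: "ang_term \<omega> z (C ! i) \<le> S" unfolding S_def
  proof -
    have "(\<Sum>i<length C. ang_term \<omega> z (C ! i)) = ang_term \<omega> z (C ! i) + (\<Sum>j\<in>{..<length C} - {i}. ang_term \<omega> z (C ! j))"
      using assms(2) by (intro sum.remove) auto
    moreover have "0 \<le> (\<Sum>j\<in>{..<length C} - {i}. ang_term \<omega> z (C ! j))"
      by (intro sum_nonneg ang_term_nonneg)
    ultimately show "ang_term \<omega> z (C ! i) \<le> (\<Sum>i<length C. ang_term \<omega> z (C ! i))"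
      by (simp add: ereal_le_add_self)
  qed
  have "length C > 0" using assms(2) by linarith
  then have m: "real (length C) > 0" by simp
  have L: "ereal (1 / real (length C)) * S \<le> ereal \<epsilon>" using assms(1) unfolding L_ang_def S_def by simp
  have "S \<noteq> \<infinity>"
  proof
    assume "S = \<infinity>" then show False using L m by simp
  qed
  with S0 obtain s where s: "S = ereal s" by (cases S) auto
  then have "s / real (length C) \<le> \<epsilon>" using L by simp
  then have "s \<le> real (length C) * \<epsilon>" using m by (simp add: divide_le_eq mult.commute)
  then have "ereal s \<le> ereal (real (length C) * \<epsilon>)" by simp
  then show ?thesis using ti s by (metis order_trans)
qed

theorem corollary1:
  fixes C :: "('j \<times> 'j \<times> bool) list"
    and z :: "'j \<Rightarrow> real ^ 'd"
    and \<omega> \<epsilon> :: real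
  assumes "\<omega> > 0"
    and "\<epsilon> > 0"
    and "\<forall>j. z j \<noteq> 0"
    and "L_ang \<omega> z C \<le> ereal \<epsilon>"
  shows "(\<forall>i < length C. \<forall>a b. C ! i = (a, b, True) \<longrightarrow>
            0 \<le> vec_angle (z a) (z b)
          \<and> vec_angle (z a) (z b) \<le> Delta_plus (length C) \<epsilon>
          \<and> ((\<lambda>e. Delta_plus (length C) e / (2 * sqrt (real (length C) * e))) \<longlongrightarrow> 1)
              (at_right 0))
       \<and> (\<forall>i < length C. \<forall>a b. C ! i = (a, b, False) \<longrightarrow> vec_angle (z a) (z b) \<le> pi / \<omega> \<longrightarrow>
            0 \<le> pi / \<omega> - vec_angle (z a) (z b)
          \<and> pi / \<omega> - vec_angle (z a) (z b) \<le> Delta_minus \<omega> (length C) \<epsilon>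
          \<and> ((\<lambda>e. Delta_minus \<omega> (length C) e / (2 * sqrt (real (length C) * e) / \<omega>)) \<longlongrightarrow> 1)
              (at_right 0))"
proof -
  define m where "m = real (length C)"
  have y1: "-1 \<le> 2 * exp (- m * \<epsilon>) - 1" by (simp add: add_increasing)
  have y2: "2 * exp (- m * \<epsilon>) - 1 \<le> 1" using assms(2) by (simp add: m_def)
  have lim: "((\<lambda>e. Delta_plus (length C) e / (2 * sqrt (real (length C) * e))) \<longlongrightarrow> 1) (at_right 0)"
    if "i < length C" for i
  proof -
    have "length C > 0" using that by linarith
    then have "m > 0" by (simp add: m_def)
    then show ?thesis using base_lim[of m] unfolding Delta_plus_def m_def by simp
  qed
  have lim2: "((\<lambda>e. Delta_minus \<omega> (length C) e / (2 * sqrt (real (length C) * e) / \<omega>)) \<longlongrightarrow> 1) (at_right 0)"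
    if "i < length C" for i
  proof -
    have "(\<lambda>e. Delta_minus \<omega> (length C) e / (2 * sqrt (real (length C) * e) / \<omega>))
        = (\<lambda>e. Delta_plus (length C) e / (2 * sqrt (real (length C) * e)))"
      using assms(1) unfolding Delta_minus_def Delta_plus_def by (auto simp: field_simps)
    then show ?thesis using lim[OF that] by simp
  qed
  have P: "0 \<le> vec_angle (z a) (z b) \<and> vec_angle (z a) (z b) \<le> Delta_plus (length C) \<epsilon>"
    if "i < length C" "C ! i = (a, b, True)" for i a b
  proof -
    let ?t = "vec_angle (z a) (z b)"
    have A: "0 \<le> ?t" "?t \<le> pi" "cos ?t = inner (z a) (z b) / (norm (z a) * norm (z b))"
      using cos_vec_angle[of "z a" "z b"] assms(3) by auto
    have "neglog (Sim \<omega> z a b True) \<le> ereal (m * \<epsilon>)"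
      using term_bound[OF assms(4) that(1)] that(2) unfolding ang_term_def m_def by simp
    from neglog_bound[OF this] have "exp (- (m * \<epsilon>)) \<le> (cos ?t + 1) / 2"
      unfolding Sim_def by simp
    then have c: "2 * exp (- m * \<epsilon>) - 1 \<le> cos ?t" by simp
    have "arccos (cos ?t) \<le> arccos (2 * exp (- m * \<epsilon>) - 1)"
      by (rule arccos_le_arccos[OF y1 c]) simp
    then show ?thesis using A arccos_cos[OF A(1,2)] unfolding Delta_plus_def m_def by simp
  qed
  have N: "0 \<le> pi / \<omega> - vec_angle (z a) (z b) \<and> pi / \<omega> - vec_angle (z a) (z b) \<le> Delta_minus \<omega> (length C) \<epsilon>"
    if "i < length C" "C ! i = (a, b, False)" "vec_angle (z a) (z b) \<le> pi / \<omega>" for i a b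
  proof -
    let ?t = "vec_angle (z a) (z b)"
    have A: "0 \<le> ?t" "?t \<le> pi"
      using cos_vec_angle[of "z a" "z b"] assms(3) by auto
    have wt: "\<omega> * ?t \<le> pi" using that(3) assms(1) by (simp add: field_simps)
    have wt0: "0 \<le> \<omega> * ?t" using A assms(1) by simp
    define phi where "phi = pi - \<omega> * ?t"
    have ph: "0 \<le> phi" "phi \<le> pi" using wt wt0 by (auto simp: phi_def)
    have "neglog (1 - Sim \<omega> z a b False) \<le> ereal (m * \<epsilon>)"
      using term_bound[OF assms(4) that(1)] that(2) unfolding ang_term_def m_def by simp
    from neglog_bound[OF this] have "exp (- (m * \<epsilon>)) \<le> 1 - (cos (\<omega> * ?t) + 1) / 2"
      unfolding Sim_def using wt by (simp add: min_def)
    moreover have "cos phi = - cos (\<omega> * ?t)" by (simp add: phi_def)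
    ultimately have c: "2 * exp (- m * \<epsilon>) - 1 \<le> cos phi" using exp_minus_eq[of m \<epsilon>]
      by (rule lin_aux)
    have "arccos (cos phi) \<le> arccos (2 * exp (- m * \<epsilon>) - 1)"
      by (rule arccos_le_arccos[OF y1 c]) simp
    then have "phi \<le> arccos (2 * exp (- m * \<epsilon>) - 1)" using arccos_cos[OF ph] by simp
    then have "phi / \<omega> \<le> (1 / \<omega>) * arccos (2 * exp (- m * \<epsilon>) - 1)"
      using assms(1) by (simp add: divide_right_mono)
    moreover have "phi / \<omega> = pi / \<omega> - ?t" using assms(1) by (simp add: phi_def field_simps)
    ultimately show ?thesis using that(3) unfolding Delta_minus_def m_def by simp
  qed
  show ?thesis using P N lim lim2 by blast
qed

end
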